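(* For every single-elimination tournament $\mathcal{T}$ with at least $2$ players and every scoring system $\sigma$ of $\mathcal{T}$, \[\dim(\mathcal{T},\sigma)\ge \max_{x\in M(\mathcal{T})}\Big(|P(x)|-\max_{u\in N^-(x)}|P(u)|\Big).\] Moreover, for every such $\mathcal{T}$ there exists a scoring system $\sigma$ for which equality holds.
   Context: A single-elimination tournament is a finite directed graph $\mathcal{T}$ such that: (a) $\mathcal{T}$ has exactly one sink (vertex with no out-neighbours); (b) every non-sink vertex has exactly one out-neighbour; (c) $\mathcal{T}$ has no directed cycles; (d) $|N^-(v)|\ne 1$ for every vertex $v$, where $N^-(v)$ (resp. $N^+(v)$) denotes the set of in-neighbours (resp. out-neighbours) of $v$. The players $P(\mathcal{T})$ are the sources (vertices with no in-neighbours) and the matches are $M(\mathcal{T})=V(\mathcal{T})\setminus P(\mathcal{T})$. For a vertex $u$, $P(u)$ is the set of players $a$ for which there is a directed walk from $a$ to $u$, i.e. a sequence $(u_1,\dots,u_t)$, $t\ge 1$, with $u_1=a$, $u_t=u$, $u_{i+1}\in N^+(u_i)$ (so $P(a)=\{a\}$ for a player $a$). A bracket is a function $B:V(\mathcal{T})\to P(\mathcal{T})$ with $B(a)=a$ for every player $a$ and $B(x)\in\{B(u):u\in N^-(x)\}$ for every match $x$. A scoring system is any function $\sigma:M(\mathcal{T})\to\mathbb{R}_{>0}$. For brackets $B,B'$ let $\mathrm{score}_\sigma(B,B')=\sum_{x\in M(\mathcal{T}):\,B(x)=B'(x)}\sigma(x)$. A set of brackets $\mathcal{B}$ is $\sigma$-resolving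 if for every pair of distinct brackets $B\ne B'$ there is $B_i\in\mathcal{B}$ with $\mathrm{score}_\sigma(B_i,B)\ne\mathrm{score}_\sigma(B_i,B')$. $\dim(\mathcal{T},\sigma)$ denotes the minimum size of a $\sigma$-resolving set. *)

theory Defs
  imports Main "HOL-Library.Extended_Real" Complex_Main
begin

definition out_nbrs :: "('v \<times> 'v) set \<Rightarrow> 'v \<Rightarrow> 'v set" where
  "out_nbrs E v = {w. (v, w) \<in> E}"

definition in_nbrs :: "('v \<times> 'v) set \<Rightarrow> 'v \<Rightarrow> 'v set" where
  "in_nbrs E v = {u. (u, v) \<in> E}"

definition sinks :: "'v set \<Rightarrow> ('v \<times> 'v) set \<Rightarrow> 'v set" where
  "sinks V E = {v \<in> V. out_nbrs E v = {}}"

definition se_tournament :: "'v set \<Rightarrow> ('v \<times> 'v) set \<Rightarrow> bool" where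
  "se_tournament V E \<longleftrightarrow>
     finite V \<and> E \<subseteq> V \<times> V \<and>
     card (sinks V E) = 1 \<and>
     (\<forall>v\<in>V - sinks V E. card (out_nbrs E v) = 1) \<and>
     acyclic E \<and>
     (\<forall>v\<in>V. card (in_nbrs E v) \<noteq> 1)"

definition players :: "'v set \<Rightarrow> ('v \<times> 'v) set \<Rightarrow> 'v set" where
  "players V E = {v \<in> V. in_nbrs E v = {}}"

definition matches :: "'v set \<Rightarrow> ('v \<times> 'v) set \<Rightarrow> 'v set" where
  "matches V E = V - players V E"

definition players_of :: "'v set \<Rightarrow> ('v \<times> 'v) set \<Rightarrow> 'v \<Rightarrow> 'v set" where
  "players_of V E u = {a \<in> players V E. (a, u) \<in> E\<^sup>*}"

definition brackets :: "'v set \<Rightarrow> ('v \<times> 'v) set \<Rightarrow> ('v \<Rightarrow> 'v) set" where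
  "brackets V E = {B. (\<forall>a\<in>players V E. B a = a) \<and>
                      (\<forall>x\<in>matches V E. B x \<in> B ` in_nbrs E x) \<and>
                      (\<forall>x. x \<notin> V \<longrightarrow> B x = undefined)}"

definition scoring_system :: "'v set \<Rightarrow> ('v \<times> 'v) set \<Rightarrow> ('v \<Rightarrow> real) \<Rightarrow> bool" where
  "scoring_system V E \<sigma> \<longleftrightarrow> (\<forall>x\<in>matches V E. \<sigma> x > 0)"

definition score :: "'v set \<Rightarrow> ('v \<times> 'v) set \<Rightarrow> ('v \<Rightarrow> real) \<Rightarrow> ('v \<Rightarrow> 'v) \<Rightarrow> ('v \<Rightarrow> 'v) \<Rightarrow> real" where
  "score V E \<sigma> B B' = (\<Sum>x\<in>{x \<in> matches V E. B x = B' x}. \<sigma> x)"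

definition resolving :: "'v set \<Rightarrow> ('v \<times> 'v) set \<Rightarrow> ('v \<Rightarrow> real) \<Rightarrow> ('v \<Rightarrow> 'v) set \<Rightarrow> bool" where
  "resolving V E \<sigma> \<B> \<longleftrightarrow> \<B> \<subseteq> brackets V E \<and>
     (\<forall>B\<in>brackets V E. \<forall>B'\<in>brackets V E. B \<noteq> B' \<longrightarrow>
        (\<exists>Bi\<in>\<B>. score V E \<sigma> Bi B \<noteq> score V E \<sigma> Bi B'))"

definition tdim :: "'v set \<Rightarrow> ('v \<times> 'v) set \<Rightarrow> ('v \<Rightarrow> real) \<Rightarrow> nat" where
  "tdim V E \<sigma> = (LEAST k. \<exists>\<B>. resolving V E \<sigma> \<B> \<and> finite \<B> \<and> card \<B> = k)"

definition dim_bound :: "'v set \<Rightarrow> ('v \<times> 'v) set \<Rightarrow> nat" where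
  "dim_bound V E = (MAX x\<in>matches V E.
      card (players_of V E x) - (MAX u\<in>in_nbrs E x. card (players_of V E u)))"

end

theory Submission
  imports Defs "HOL-Library.Product_Lexorder" "HOL-Library.FuncSet"
begin

locale tour =
  fixes V :: "'v set" and E :: "('v \<times> 'v) set"
  assumes st: "se_tournament V E"
begin

abbreviation "PL \<equiv> players V E"
abbreviation "MT \<equiv> matches V E"
abbreviation "PO \<equiv> players_of V E"

lemma finV: "finite V" and EV: "E \<subseteq> V \<times> V" and acyc: "acyclic E"
  and indeg: "\<And>v. v \<in> V \<Longrightarrow> card (in_nbrs E v) \<noteq> 1"
  and outdeg: "\<And>v. v \<in> V - sinks V E \<Longrightarrow> card (out_nbrs E v) = 1"
  using st unfolding se_tournament_def by auto

lemma finE: "finite E"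
  using finV EV by (meson finite_SigmaI finite_subset)

lemma wfE: "wf E"
  using finE acyc by (rule finite_acyclic_wf)

lemma edgeV: "(u,v) \<in> E \<Longrightarrow> u \<in> V \<and> v \<in> V"
  using EV by auto

lemma out_uniq: assumes "(v,w) \<in> E" "(v,w') \<in> E" shows "w = w'"
proof -
  have "v \<in> V" using assms edgeV by auto
  moreover have "v \<notin> sinks V E" using assms unfolding sinks_def out_nbrs_def by auto
  ultimately have "card (out_nbrs E v) = 1" using outdeg by auto
  then obtain z where "out_nbrs E v = {z}" by (auto simp: card_Suc_eq)
  then have "w \<in> {z}" "w' \<in> {z}" using assms unfolding out_nbrs_def by (metis mem_Collect_eq)+
  then show ?thesis by simp
qed

lemma comparable:
  assumes "(a,b) \<in> E\<^sup>*" "(a,c) \<in> E\<^sup>*"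
  shows "(b,c) \<in> E\<^sup>* \<or> (c,b) \<in> E\<^sup>*"
  using assms
proof (induction rule: converse_rtrancl_induct)
  case base
  then show ?case by auto
next
  case (step y z)
  from step.prems show ?case
  proof (cases rule: converse_rtranclE)
    case base
    then show ?thesis using step by (meson converse_rtrancl_into_rtrancl)
  next
    case (step w)
    then have "w = z" using out_uniq \<open>(y,z) \<in> E\<close> by auto
    then show ?thesis using step.IH step by auto
  qed
qed

lemma PO_sub: "PO x \<subseteq> PL"
  unfolding players_of_def by auto

lemma PL_V: "PL \<subseteq> V"
  unfolding players_def by auto

lemma finPO: "finite (PO x)"
  using PO_sub PL_V finV by (meson finite_subset)

lemma PO_mono: "(y,z) \<in> E\<^sup>* \<Longrightarrow> PO y \<subseteq> PO z"
  unfolding players_of_def by auto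

lemma PO_edge: "(y,z) \<in> E \<Longrightarrow> PO y \<subseteq> PO z"
  using PO_mono[OF r_into_rtrancl] .

lemma PO_player: assumes "a \<in> PL" shows "PO a = {a}"
proof -
  have "a' = a" if "(a',a) \<in> E\<^sup>*" for a'
    using that
  proof (cases rule: rtranclE)
    case (step y)
    then show ?thesis using assms unfolding players_def in_nbrs_def by auto
  qed simp
  then show ?thesis using assms unfolding players_of_def by auto
qed

lemma match_in: "x \<in> MT \<Longrightarrow> in_nbrs E x \<noteq> {}"
  unfolding matches_def players_def by auto

lemma in_nbrs_V: "in_nbrs E x \<subseteq> V"
  unfolding in_nbrs_def using EV by auto

lemma fin_in: "finite (in_nbrs E x)"
  by (rule finite_subset[OF in_nbrs_V finV])

lemma match_two: assumes "x \<in> MT" "u \<in> in_nbrs E x"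
  shows "\<exists>u'\<in>in_nbrs E x. u' \<noteq> u"
proof (rule ccontr)
  assume "\<not> ?thesis"
  then have "\<forall>u'\<in>in_nbrs E x. u' = u" by blast
  then have "in_nbrs E x = {u}" using assms(2) by blast
  then have "card (in_nbrs E x) = 1" by simp
  moreover have "x \<in> V" using assms(1) unfolding matches_def by blast
  ultimately show False using indeg by blast
qed

lemma PO_match: assumes "x \<in> MT" shows "PO x = (\<Union>u\<in>in_nbrs E x. PO u)"
proof
  show "(\<Union>u\<in>in_nbrs E x. PO u) \<subseteq> PO x"
    using PO_mono unfolding in_nbrs_def by blast
next
  show "PO x \<subseteq> (\<Union>u\<in>in_nbrs E x. PO u)"
  proof
    fix a assume a: "a \<in> PO x"
    then have "a \<in> PL" "(a,x) \<in> E\<^sup>*" unfolding players_of_def by auto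
    moreover have "a \<noteq> x" using assms \<open>a \<in> PL\<close> unfolding matches_def by auto
    ultimately obtain u where "(a,u) \<in> E\<^sup>*" "(u,x) \<in> E"
      by (metis rtranclE)
    then show "a \<in> (\<Union>u\<in>in_nbrs E x. PO u)"
      using \<open>a \<in> PL\<close> unfolding players_of_def in_nbrs_def by auto
  qed
qed

lemma child_uniq:
  assumes "(u,x) \<in> E" "(u',x) \<in> E" "a \<in> PO u" "a \<in> PO u'"
  shows "u = u'"
proof (rule ccontr)
  assume ne: "u \<noteq> u'"
  have "(a,u) \<in> E\<^sup>*" "(a,u') \<in> E\<^sup>*" using assms unfolding players_of_def by auto
  then have "(u,u') \<in> E\<^sup>* \<or> (u',u) \<in> E\<^sup>*" by (rule comparable)
  then show False
  proof
    assume "(u,u') \<in> E\<^sup>*"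
    then obtain w where "(u,w) \<in> E" "(w,u') \<in> E\<^sup>*" using ne by (metis converse_rtranclE)
    then have "w = x" using assms out_uniq by auto
    then have "(x,x) \<in> E\<^sup>+" using \<open>(w,u') \<in> E\<^sup>*\<close> assms(2) by auto
    then show False using acyc unfolding acyclic_def by auto
  next
    assume "(u',u) \<in> E\<^sup>*"
    then obtain w where "(u',w) \<in> E" "(w,u) \<in> E\<^sup>*" using ne by (metis converse_rtranclE)
    then have "w = x" using assms out_uniq by auto
    then have "(x,x) \<in> E\<^sup>+" using \<open>(w,u) \<in> E\<^sup>*\<close> assms(1) by auto
    then show False using acyc unfolding acyclic_def by auto
  qed
qed

lemma PO_nonempty: "y \<in> V \<Longrightarrow> PO y \<noteq> {}"
proof (induction y rule: wf_induct_rule[OF wfE])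
  case (1 y)
  show ?case
  proof (cases "y \<in> PL")
    case True then show ?thesis using PO_player by auto
  next
    case False
    then have "y \<in> MT" using 1 unfolding matches_def by auto
    then obtain u where u: "u \<in> in_nbrs E y" using match_in by auto
    then have "(u,y) \<in> E" "u \<in> V" using in_nbrs_V unfolding in_nbrs_def by auto
    then have "PO u \<noteq> {}" using 1 by auto
    then show ?thesis using PO_edge[OF \<open>(u,y) \<in> E\<close>] by blast
  qed
qed


lemma bracket_PO: assumes B: "B \<in> brackets V E" shows "x \<in> V \<Longrightarrow> B x \<in> PO x"
proof (induction x rule: wf_induct_rule[OF wfE])
  case (1 x)
  show ?case
  proof (cases "x \<in> PL")
    case True then show ?thesis using B PO_player unfolding brackets_def by auto
  next
    case False
    then have "x \<in> MT" using 1 unfolding matches_def by auto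
    then obtain u where u: "u \<in> in_nbrs E x" "B x = B u" using B unfolding brackets_def by auto
    then have "(u,x) \<in> E" "u \<in> V" using in_nbrs_V unfolding in_nbrs_def by auto
    then have "B u \<in> PO u" using 1 by auto
    then show ?thesis using PO_edge[OF \<open>(u,x) \<in> E\<close>] u by auto
  qed
qed

lemma brackets_finite: "finite (brackets V E)"
proof -
  have "brackets V E \<subseteq> PiE V (\<lambda>_. V)"
  proof
    fix B assume B: "B \<in> brackets V E"
    have "B x \<in> V" if "x \<in> V" for x using bracket_PO[OF B that] PO_sub PL_V by auto
    moreover have "B x = undefined" if "x \<notin> V" for x using B that unfolding brackets_def by auto
    ultimately show "B \<in> PiE V (\<lambda>_. V)" by (auto simp: PiE_iff extensional_def)
  qed
  moreover have "finite (PiE V (\<lambda>_. V))" using finV by (simp add: finite_PiE)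
  ultimately show ?thesis by (rule finite_subset)
qed

definition win :: "('v \<Rightarrow> 'k::linorder) \<Rightarrow> 'v \<Rightarrow> 'v" where
  "win \<pi> y = (if y \<in> V then (THE a. a \<in> PO y \<and> (\<forall>b\<in>PO y. \<pi> a \<le> \<pi> b)) else undefined)"

lemma win_ex: fixes \<pi> :: "'v \<Rightarrow> 'k::linorder" assumes "y \<in> V" shows "\<exists>a\<in>PO y. \<forall>b\<in>PO y. \<pi> a \<le> \<pi> b"
proof -
  let ?m = "Min (\<pi> ` PO y)"
  have ne: "\<pi> ` PO y \<noteq> {}" using PO_nonempty assms by auto
  have fin: "finite (\<pi> ` PO y)" using finPO by auto
  have "?m \<in> \<pi> ` PO y" using Min_in[OF fin ne] .
  then obtain a where "a \<in> PO y" "\<pi> a = ?m" by auto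
  moreover have "\<forall>b\<in>PO y. ?m \<le> \<pi> b" using Min_le[OF fin] by auto
  ultimately have "\<forall>b\<in>PO y. \<pi> a \<le> \<pi> b" by simp
  then show ?thesis using \<open>a \<in> PO y\<close> by blast
qed

lemma win_unique:
  assumes inj: "inj_on \<pi> PL" and y: "y \<in> V" and a: "a \<in> PO y" "\<forall>b\<in>PO y. \<pi> a \<le> \<pi> b"
  shows "win \<pi> y = a"
proof -
  have "(THE a. a \<in> PO y \<and> (\<forall>b\<in>PO y. \<pi> a \<le> \<pi> b)) = a"
  proof (rule the_equality)
    show "a \<in> PO y \<and> (\<forall>b\<in>PO y. \<pi> a \<le> \<pi> b)" using a by auto
  next
    fix a' assume a': "a' \<in> PO y \<and> (\<forall>b\<in>PO y. \<pi> a' \<le> \<pi> b)"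
    then have "\<pi> a' = \<pi> a" using a by (meson order_antisym)
    moreover have "a \<in> PL" "a' \<in> PL" using a a' PO_sub by auto
    ultimately show "a' = a" using inj unfolding inj_on_def by auto
  qed
  then show ?thesis using y unfolding win_def by auto
qed

lemma win_prop:
  assumes inj: "inj_on \<pi> PL" and y: "y \<in> V"
  shows "win \<pi> y \<in> PO y \<and> (\<forall>b\<in>PO y. \<pi> (win \<pi> y) \<le> \<pi> b)"
proof -
  obtain a where "a \<in> PO y" "\<forall>b\<in>PO y. \<pi> a \<le> \<pi> b" using win_ex[OF y] by auto
  moreover then have "win \<pi> y = a" using win_unique[OF inj y] by auto
  ultimately show ?thesis by auto
qed

lemma win_bracket: assumes inj: "inj_on \<pi> PL" shows "win \<pi> \<in> brackets V E"
  unfolding brackets_def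
proof (intro CollectI conjI ballI allI impI)
  fix a assume a: "a \<in> PL"
  then have "a \<in> V" using PL_V by auto
  then show "win \<pi> a = a" using win_unique[OF inj, of a a] PO_player[OF a] by auto
next
  fix x assume x: "x \<in> MT"
  then have xV: "x \<in> V" unfolding matches_def by auto
  have w: "win \<pi> x \<in> PO x" "\<forall>b\<in>PO x. \<pi> (win \<pi> x) \<le> \<pi> b" using win_prop[OF inj xV] by auto
  then obtain u where u: "u \<in> in_nbrs E x" "win \<pi> x \<in> PO u" using PO_match[OF x] by auto
  then have uV: "u \<in> V" using in_nbrs_V by auto
  have "PO u \<subseteq> PO x" using PO_match[OF x] u by auto
  then have "win \<pi> u = win \<pi> x" using win_unique[OF inj uV u(2)] w by auto
  then have "win \<pi> x = win \<pi> u" by simp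
  then show "win \<pi> x \<in> win \<pi> ` in_nbrs E x" by (rule rev_image_eqI[OF u(1)])
next
  fix x :: 'v assume "x \<notin> V" then show "win \<pi> x = undefined" unfolding win_def by auto
qed


definition iota :: "'v \<Rightarrow> nat" where
  "iota = (SOME f. inj_on f V)"

lemma inj_iota: "inj_on iota V"
proof -
  obtain f :: "'v \<Rightarrow> nat" and n where "f ` V = {i. i < n} \<and> inj_on f V"
    using finite_imp_inj_to_nat_seg[OF finV] by (elim exE)
  then have "inj_on f V" by (rule conjunct2)
  then show ?thesis unfolding iota_def by (rule someI[of "\<lambda>f. inj_on f V" f])
qed

lemma inj_iota_PL: "inj_on iota PL"
  by (rule inj_on_subset[OF inj_iota PL_V])

lemma strictly_above:
  assumes "(x,y) \<in> E\<^sup>+" shows "\<exists>z\<in>PO y. z \<notin> PO x"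
proof -
  obtain v where v: "(x,v) \<in> E\<^sup>*" "(v,y) \<in> E" using tranclD2[OF assms] by blast
  have yV: "y \<in> V" using v edgeV by auto
  have "y \<notin> PL" using v unfolding players_def in_nbrs_def by auto
  then have yM: "y \<in> MT" using yV unfolding matches_def by auto
  have "v \<in> in_nbrs E y" using v unfolding in_nbrs_def by auto
  then obtain v' where v': "v' \<in> in_nbrs E y" "v' \<noteq> v" using match_two[OF yM] by auto
  then have "v' \<in> V" "(v',y) \<in> E" using in_nbrs_V unfolding in_nbrs_def by auto
  then obtain z where z: "z \<in> PO v'" using PO_nonempty by auto
  have "z \<in> PO y" using z PO_edge[OF \<open>(v',y) \<in> E\<close>] by blast
  moreover have "z \<notin> PO x"
  proof
    assume "z \<in> PO x"
    then have "z \<in> PO v" using PO_mono[OF v(1)] by blast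
    then have "v = v'" using child_uniq[OF v(2) \<open>(v',y) \<in> E\<close> _ z] by blast
    then show False using v'(2) by simp
  qed
  ultimately show ?thesis by auto
qed

lemma meet_eq:
  assumes vx: "(v,x) \<in> E" and wx: "(w,x) \<in> E" and vw: "v \<noteq> w"
    and p: "p \<in> PO v" and q: "q \<in> PO w"
    and y: "p \<in> PO y" "q \<in> PO y" "PO y \<subseteq> PO x"
  shows "y = x"
proof (rule ccontr)
  assume ne: "y \<noteq> x"
  have "p \<in> PO x" using PO_edge[OF vx] p by blast
  then have "(p,y) \<in> E\<^sup>*" "(p,x) \<in> E\<^sup>*" using y unfolding players_of_def by auto
  then have "(y,x) \<in> E\<^sup>* \<or> (x,y) \<in> E\<^sup>*" by (rule comparable)
  then show False
  proof
    assume "(y,x) \<in> E\<^sup>*"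
    then have "y = x \<or> y \<noteq> x \<and> (y,x) \<in> E\<^sup>+" by (rule rtranclD)
    then have "(y,x) \<in> E\<^sup>+" using ne by simp
    then have "\<exists>u. (y,u) \<in> E\<^sup>* \<and> (u,x) \<in> E" by (rule tranclD2)
    then obtain u where u: "(y,u) \<in> E\<^sup>*" "(u,x) \<in> E" by blast
    have pu: "p \<in> PO u" and qu: "q \<in> PO u" using PO_mono[OF u(1)] y by auto
    have "u = v" using child_uniq[OF u(2) vx pu p] .
    moreover have "u = w" using child_uniq[OF u(2) wx qu q] .
    ultimately show False using vw by auto
  next
    assume "(x,y) \<in> E\<^sup>*"
    then have "x = y \<or> x \<noteq> y \<and> (x,y) \<in> E\<^sup>+" by (rule rtranclD)
    then have "(x,y) \<in> E\<^sup>+" using ne by auto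
    then obtain z where "z \<in> PO y" "z \<notin> PO x" using strictly_above by blast
    then show False using y by blast
  qed
qed

lemma pair_brackets:
  assumes x: "x \<in> MT" and v: "v \<in> in_nbrs E x" and w: "w \<in> in_nbrs E x" and vw: "v \<noteq> w"
    and p: "p \<in> PO v" and q: "q \<in> PO w"
  shows "\<exists>B\<in>brackets V E. \<exists>B'\<in>brackets V E. B x = p \<and> B' x = q \<and> (\<forall>y. y \<noteq> x \<longrightarrow> B y = B' y)"
proof -
  have vx: "(v,x) \<in> E" and wx: "(w,x) \<in> E" using v w unfolding in_nbrs_def by auto
  have xV: "x \<in> V" using x unfolding matches_def by auto
  have pq: "p \<noteq> q" using child_uniq[OF vx wx] p q vw by auto
  have px: "p \<in> PO x" and qx: "q \<in> PO x" using PO_edge[OF vx] PO_edge[OF wx] p q by auto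
  define \<pi> where "\<pi> a = ((if a \<notin> PO x then 0 else if a = p then 1 else if a = q then 2 else 3::nat), iota a)" for a
  define \<pi>' where "\<pi>' a = ((if a \<notin> PO x then 0 else if a = q then 1 else if a = p then 2 else 3::nat), iota a)" for a
  have inj1: "inj_on \<pi> PL" using inj_iota_PL unfolding \<pi>_def inj_on_def by auto
  have inj2: "inj_on \<pi>' PL" using inj_iota_PL unfolding \<pi>'_def inj_on_def by auto
  have B1: "win \<pi> x = p"
  proof (rule win_unique[OF inj1 xV px], rule ballI)
    fix b assume "b \<in> PO x" then show "\<pi> p \<le> \<pi> b" using px unfolding \<pi>_def by auto
  qed
  have B2: "win \<pi>' x = q"
  proof (rule win_unique[OF inj2 xV qx], rule ballI)
    fix b assume "b \<in> PO x" then show "\<pi>' q \<le> \<pi>' b" using qx pq unfolding \<pi>'_def by auto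
  qed
  have eq: "win \<pi> y = win \<pi>' y" if yx: "y \<noteq> x" for y
  proof (cases "y \<in> V")
    case False then show ?thesis unfolding win_def by auto
  next
    case yV: True
    define m where "m = win \<pi> y"
    have m: "m \<in> PO y" "\<forall>b\<in>PO y. \<pi> m \<le> \<pi> b" using win_prop[OF inj1 yV] unfolding m_def by auto
    show ?thesis
    proof (cases "PO y \<subseteq> PO x")
      case False
      then obtain z where z: "z \<in> PO y" "z \<notin> PO x" by auto
      then have "\<pi> m \<le> \<pi> z" using m by auto
      moreover have "\<pi> z = (0, iota z)" using z unfolding \<pi>_def by simp
      ultimately have "fst (\<pi> m) \<le> 0" by (auto simp: less_eq_prod_def)
      then have mx: "m \<notin> PO x" unfolding \<pi>_def by (auto split: if_splits)
      have "\<forall>b\<in>PO y. \<pi>' m \<le> \<pi>' b"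
      proof
        fix b assume b: "b \<in> PO y"
        have pm: "\<pi>' m = (0, iota m)" "\<pi> m = (0, iota m)" using mx unfolding \<pi>'_def \<pi>_def by auto
        show "\<pi>' m \<le> \<pi>' b"
        proof (cases "b \<in> PO x")
          case True then show ?thesis using pm unfolding \<pi>'_def by auto
        next
          case False
          then have "\<pi>' b = \<pi> b" unfolding \<pi>'_def \<pi>_def by simp
          then show ?thesis using pm m b by auto
        qed
      qed
      then show ?thesis using win_unique[OF inj2 yV m(1)] m_def by auto
    next
      case True
      have npq: "\<not> (p \<in> PO y \<and> q \<in> PO y)" using meet_eq[OF vx wx vw p q] True yx by auto
      show ?thesis
      proof (cases "p \<in> PO y")
        case pin: True
        then have qn: "q \<notin> PO y" using npq by auto
        have "win \<pi> y = p"
        proof (rule win_unique[OF inj1 yV pin], rule ballI)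
          fix b assume b: "b \<in> PO y"
          then have "b \<in> PO x" "b \<noteq> q" using True qn by auto
          then show "\<pi> p \<le> \<pi> b" unfolding \<pi>_def using px by auto
        qed
        moreover have "win \<pi>' y = p"
        proof (rule win_unique[OF inj2 yV pin], rule ballI)
          fix b assume b: "b \<in> PO y"
          then have "b \<in> PO x" "b \<noteq> q" using True qn by auto
          then show "\<pi>' p \<le> \<pi>' b" unfolding \<pi>'_def using px pq by auto
        qed
        ultimately show ?thesis by simp
      next
        case pn: False
        show ?thesis
        proof (cases "q \<in> PO y")
          case qin: True
          have "win \<pi> y = q"
          proof (rule win_unique[OF inj1 yV qin], rule ballI)
            fix b assume b: "b \<in> PO y"
            then have "b \<in> PO x" "b \<noteq> p" using True pn by auto
            then show "\<pi> q \<le> \<pi> b" unfolding \<pi>_def using qx pq by auto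
          qed
          moreover have "win \<pi>' y = q"
          proof (rule win_unique[OF inj2 yV qin], rule ballI)
            fix b assume b: "b \<in> PO y"
            then have "b \<in> PO x" "b \<noteq> p" using True pn by auto
            then show "\<pi>' q \<le> \<pi>' b" unfolding \<pi>'_def using qx by auto
          qed
          ultimately show ?thesis by simp
        next
          case qn: False
          have same: "\<pi>' b = \<pi> b" if "b \<in> PO y" for b
            using that pn qn unfolding \<pi>'_def \<pi>_def by (cases "b = p"; cases "b = q") auto
          have "\<forall>b\<in>PO y. \<pi>' m \<le> \<pi>' b" using m same by auto
          then show ?thesis using win_unique[OF inj2 yV m(1)] m_def by auto
        qed
      qed
    qed
  qed
  have b1: "win \<pi> \<in> brackets V E" using win_bracket[OF inj1] .
  have b2: "win \<pi>' \<in> brackets V E" using win_bracket[OF inj2] .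
  show ?thesis
    apply (rule bexI[OF _ b1])
    apply (rule bexI[OF _ b2])
    using B1 B2 eq by simp
qed


lemma finMT: "finite MT"
  using finV unfolding matches_def by simp

lemma MT_V: "MT \<subseteq> V"
  unfolding matches_def by auto

lemma lower_sub:
  assumes R: "resolving V E \<sigma> R" and x: "x \<in> MT"
  shows "\<exists>u\<in>in_nbrs E x. PO x - PO u \<subseteq> (\<lambda>B. B x) ` R"
proof (rule ccontr)
  let ?S = "(\<lambda>B. B x) ` R"
  assume "\<not> ?thesis"
  then have neg: "\<forall>u\<in>in_nbrs E x. \<exists>a\<in>PO x - PO u. a \<notin> ?S" by blast
  obtain u0 where u0: "u0 \<in> in_nbrs E x" using match_in[OF x] by blast
  obtain a where a: "a \<in> PO x" "a \<notin> PO u0" "a \<notin> ?S" using neg u0 by blast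
  obtain v where v: "v \<in> in_nbrs E x" "a \<in> PO v" using a(1) PO_match[OF x] by blast
  obtain b where b: "b \<in> PO x" "b \<notin> PO v" "b \<notin> ?S" using neg v(1) by blast
  obtain w where w: "w \<in> in_nbrs E x" "b \<in> PO w" using b(1) PO_match[OF x] by blast
  have vw: "v \<noteq> w" using v w b by blast
  obtain B B' where BB: "B \<in> brackets V E" "B' \<in> brackets V E" "B x = a" "B' x = b"
    "\<forall>y. y \<noteq> x \<longrightarrow> B y = B' y"
    using pair_brackets[OF x v(1) w(1) vw v(2) w(2)] by blast
  have ab: "a \<noteq> b" using v(2) b(2) by blast
  then have "B \<noteq> B'" using BB by auto
  then obtain Bi where Bi: "Bi \<in> R" "score V E \<sigma> Bi B \<noteq> score V E \<sigma> Bi B'"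
    using R BB(1,2) unfolding resolving_def by blast
  have "Bi x \<noteq> a" "Bi x \<noteq> b" using Bi(1) a(3) b(3) by (metis image_eqI)+
  then have "{y \<in> MT. Bi y = B y} = {y \<in> MT. Bi y = B' y}"
    using BB(3,4,5) by auto
  then have "score V E \<sigma> Bi B = score V E \<sigma> Bi B'" unfolding score_def by simp
  then show False using Bi(2) by simp
qed

lemma lower_card:
  assumes R: "resolving V E \<sigma> R" and fR: "finite R" and x: "x \<in> MT"
  shows "card (PO x) - (MAX u\<in>in_nbrs E x. card (PO u)) \<le> card R"
proof -
  obtain u where u: "u \<in> in_nbrs E x" "PO x - PO u \<subseteq> (\<lambda>B. B x) ` R"
    using lower_sub[OF R x] by blast
  have "card (PO x - PO u) \<le> card ((\<lambda>B. B x) ` R)"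
    using u(2) fR by (simp add: card_mono)
  also have "\<dots> \<le> card R" using fR by (rule card_image_le)
  finally have c1: "card (PO x - PO u) \<le> card R" .
  have c2: "card (PO x) - card (PO u) \<le> card (PO x - PO u)"
    using finPO by (rule diff_card_le_card_Diff)
  have c3: "card (PO u) \<le> (MAX u\<in>in_nbrs E x. card (PO u))"
    using fin_in u(1) by simp
  show ?thesis using c1 c2 c3 by linarith
qed

lemma MT_nonempty: assumes "card PL \<ge> 2" shows "MT \<noteq> {}"
proof
  assume M: "MT = {}"
  then have VP: "V = PL" using PL_V unfolding matches_def by blast
  have E0: "E = {}"
  proof (rule ccontr)
    assume "E \<noteq> {}"
    then obtain u v where uv: "(u,v) \<in> E" by auto
    then have "v \<in> V" using edgeV by blast
    then have "v \<in> PL" using VP by simp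
    then show False using uv unfolding players_def in_nbrs_def by blast
  qed
  have "sinks V E = V" using E0 unfolding sinks_def out_nbrs_def by simp
  then have "card V = 1" using st unfolding se_tournament_def by simp
  then show False using assms VP by simp
qed

lemma dim_bound_le:
  assumes R: "resolving V E \<sigma> R" and fR: "finite R" and ne: "MT \<noteq> {}"
  shows "dim_bound V E \<le> card R"
  unfolding dim_bound_def
proof (rule Max.boundedI)
  show "finite ((\<lambda>x. card (PO x) - (MAX u\<in>in_nbrs E x. card (PO u))) ` MT)" using finMT by simp
  show "(\<lambda>x. card (PO x) - (MAX u\<in>in_nbrs E x. card (PO u))) ` MT \<noteq> {}" using ne by simp
  fix k assume "k \<in> (\<lambda>x. card (PO x) - (MAX u\<in>in_nbrs E x. card (PO u))) ` MT"
  then obtain x where "x \<in> MT" "k = card (PO x) - (MAX u\<in>in_nbrs E x. card (PO u))" by blast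
  then show "k \<le> card R" using lower_card[OF R fR] by simp
qed

lemma all_resolving:
  assumes sc: "scoring_system V E \<sigma>"
  shows "resolving V E \<sigma> (brackets V E)"
  unfolding resolving_def
proof (intro conjI ballI impI subset_refl)
  fix B B' assume B: "B \<in> brackets V E" and B': "B' \<in> brackets V E" and ne: "B \<noteq> B'"
  obtain y where y: "B y \<noteq> B' y" using ne by blast
  have yV: "y \<in> V"
  proof (rule ccontr)
    assume "y \<notin> V"
    then have "B y = undefined" "B' y = undefined" using B B' unfolding brackets_def by auto
    then show False using y by simp
  qed
  have yP: "y \<notin> PL" using y B B' unfolding brackets_def by auto
  have yM: "y \<in> MT" using yV yP unfolding matches_def by simp
  let ?A = "{x \<in> MT. B x = B' x}"
  have eq1: "{x \<in> MT. B x = B x} = MT" by simp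
  have sub: "?A \<subseteq> MT" by blast
  have "sum \<sigma> MT = sum \<sigma> (MT - ?A) + sum \<sigma> ?A"
    using sum.subset_diff[OF sub finMT] .
  moreover have "0 < sum \<sigma> (MT - ?A)"
  proof (rule sum_pos)
    show "finite (MT - ?A)" using finMT by simp
    show "MT - ?A \<noteq> {}" using yM y by blast
    fix i assume "i \<in> MT - ?A" then show "0 < \<sigma> i" using sc unfolding scoring_system_def by blast
  qed
  ultimately have "sum \<sigma> ?A \<noteq> sum \<sigma> MT" by linarith
  then have "score V E \<sigma> B B \<noteq> score V E \<sigma> B B'" unfolding score_def eq1 by simp
  then show "\<exists>Bi\<in>brackets V E. score V E \<sigma> Bi B \<noteq> score V E \<sigma> Bi B'" using B by blast
qed

lemma tdim_ge:
  assumes sc: "scoring_system V E \<sigma>" and ne: "MT \<noteq> {}"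
  shows "dim_bound V E \<le> tdim V E \<sigma>"
proof -
  let ?P = "\<lambda>k. \<exists>R. resolving V E \<sigma> R \<and> finite R \<and> card R = k"
  have ex: "?P (card (brackets V E))" using all_resolving[OF sc] brackets_finite by blast
  have "?P (Least ?P)" using LeastI[of ?P, OF ex] .
  then obtain R where R: "resolving V E \<sigma> R" "finite R" "card R = Least ?P" by blast
  have "dim_bound V E \<le> card R" using dim_bound_le[OF R(1,2) ne] .
  then show ?thesis using R(3) unfolding tdim_def by simp
qed


definition heavy :: "'v \<Rightarrow> 'v" where
  "heavy x = (SOME u. u \<in> in_nbrs E x \<and> card (PO u) = (MAX u\<in>in_nbrs E x. card (PO u)))"

definition light :: "'v \<Rightarrow> 'v set" where
  "light x = PO x - PO (heavy x)"

lemma heavy: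
  assumes x: "x \<in> MT"
  shows "heavy x \<in> in_nbrs E x \<and> card (PO (heavy x)) = (MAX u\<in>in_nbrs E x. card (PO u))"
proof -
  have fin: "finite ((\<lambda>u. card (PO u)) ` in_nbrs E x)" using fin_in by simp
  have ne: "(\<lambda>u. card (PO u)) ` in_nbrs E x \<noteq> {}" using match_in[OF x] by simp
  have "(MAX u\<in>in_nbrs E x. card (PO u)) \<in> (\<lambda>u. card (PO u)) ` in_nbrs E x"
    using Max_in[OF fin ne] .
  then obtain u where "u \<in> in_nbrs E x" "card (PO u) = (MAX u\<in>in_nbrs E x. card (PO u))"
    by (metis (no_types, lifting) imageE)
  then have ex: "\<exists>u. u \<in> in_nbrs E x \<and> card (PO u) = (MAX u\<in>in_nbrs E x. card (PO u))" by blast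
  show ?thesis unfolding heavy_def using someI_ex[OF ex] .
qed

lemma heavy_edge: "x \<in> MT \<Longrightarrow> (heavy x, x) \<in> E"
  using heavy unfolding in_nbrs_def by blast

lemma heavy_sub: "x \<in> MT \<Longrightarrow> PO (heavy x) \<subseteq> PO x"
  using PO_edge[OF heavy_edge] .

lemma light_sub: "light x \<subseteq> PO x"
  unfolding light_def by blast

lemma fin_light: "finite (light x)"
  by (rule finite_subset[OF light_sub finPO])

lemma light_card_le: assumes x: "x \<in> MT" shows "card (light x) \<le> dim_bound V E"
proof -
  have "card (light x) = card (PO x) - card (PO (heavy x))"
    unfolding light_def using card_Diff_subset[OF finPO heavy_sub[OF x]] .
  also have "\<dots> = card (PO x) - (MAX u\<in>in_nbrs E x. card (PO u))" using heavy[OF x] by simp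
  also have "\<dots> \<le> dim_bound V E" unfolding dim_bound_def
    by (rule Max_ge[OF finite_imageI[OF finMT] imageI[OF x]])
  finally show ?thesis .
qed

lemma light_child:
  assumes x: "x \<in> MT" and v: "(v,x) \<in> E" and vh: "v \<noteq> heavy x"
  shows "PO v \<subseteq> light x"
proof
  fix a assume a: "a \<in> PO v"
  have "a \<in> PO x" using a PO_edge[OF v] by blast
  moreover have "a \<notin> PO (heavy x)"
  proof
    assume "a \<in> PO (heavy x)"
    then have "v = heavy x" using child_uniq[OF v heavy_edge[OF x] a] by blast
    then show False using vh by simp
  qed
  ultimately show "a \<in> light x" unfolding light_def by blast
qed

lemma light_above:
  assumes a: "a \<in> PO y" and yz: "(y,z) \<in> E\<^sup>+" and z: "z \<in> MT" and az: "a \<in> light z"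
  shows "PO y \<subseteq> light z"
proof -
  have "\<exists>v. (y,v) \<in> E\<^sup>* \<and> (v,z) \<in> E" using yz by (rule tranclD2)
  then obtain v where v: "(y,v) \<in> E\<^sup>*" "(v,z) \<in> E" by blast
  have av: "a \<in> PO v" using a PO_mono[OF v(1)] by blast
  have "v \<noteq> heavy z"
  proof
    assume "v = heavy z"
    then have "a \<in> PO (heavy z)" using av by simp
    then show False using az unfolding light_def by blast
  qed
  then have "PO v \<subseteq> light z" using light_child[OF z v(2)] by blast
  then show ?thesis using PO_mono[OF v(1)] by blast
qed

lemma light_chain:
  assumes z: "z \<in> MT" and z': "z' \<in> MT" and a: "a \<in> light z" "a \<in> light z'"
  shows "light z \<subseteq> light z' \<or> light z' \<subseteq> light z"
proof -
  have az: "a \<in> PO z" and az': "a \<in> PO z'" using a light_sub by blast+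
  have "(a,z) \<in> E\<^sup>*" "(a,z') \<in> E\<^sup>*" using az az' unfolding players_of_def by blast+
  then have "(z,z') \<in> E\<^sup>* \<or> (z',z) \<in> E\<^sup>*" by (rule comparable)
  then show ?thesis
  proof
    assume "(z,z') \<in> E\<^sup>*"
    then have "z = z' \<or> z \<noteq> z' \<and> (z,z') \<in> E\<^sup>+" by (rule rtranclD)
    then show ?thesis
    proof
      assume "z = z'" then show ?thesis by simp
    next
      assume "z \<noteq> z' \<and> (z,z') \<in> E\<^sup>+"
      then have "PO z \<subseteq> light z'" using light_above[OF az _ z' a(2)] by blast
      then show ?thesis using light_sub[of z] by blast
    qed
  next
    assume "(z',z) \<in> E\<^sup>*"
    then have "z' = z \<or> z' \<noteq> z \<and> (z',z) \<in> E\<^sup>+" by (rule rtranclD)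
    then show ?thesis
    proof
      assume "z' = z" then show ?thesis by simp
    next
      assume "z' \<noteq> z \<and> (z',z) \<in> E\<^sup>+"
      then have "PO z' \<subseteq> light z" using light_above[OF az' _ z a(1)] by blast
      then show ?thesis using light_sub[of z'] by blast
    qed
  qed
qed

definition Mset :: "'v \<Rightarrow> 'v set" where
  "Mset a = \<Union> (light ` {z \<in> MT. a \<in> light z})"

lemma Mset_eq:
  assumes x: "x \<in> MT" and a: "a \<in> light x"
  shows "\<exists>z\<in>MT. a \<in> light z \<and> Mset a = light z"
proof -
  let ?Z = "{z \<in> MT. a \<in> light z}"
  have finZ: "finite ?Z" using finMT by simp
  have xZ: "x \<in> ?Z" using x a by simp
  have fin: "finite ((\<lambda>z. card (light z)) ` ?Z)" using finZ by simp
  have ne: "(\<lambda>z. card (light z)) ` ?Z \<noteq> {}" using xZ by blast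
  have "Max ((\<lambda>z. card (light z)) ` ?Z) \<in> (\<lambda>z. card (light z)) ` ?Z" using Max_in[OF fin ne] .
  then obtain z where zZ: "z \<in> ?Z" and zm: "card (light z) = Max ((\<lambda>z. card (light z)) ` ?Z)"
    by (metis (no_types, lifting) imageE)
  have all: "light z' \<subseteq> light z" if z'Z: "z' \<in> ?Z" for z'
  proof -
    have le: "card (light z') \<le> card (light z)"
      using Max_ge[OF fin imageI[OF z'Z]] zm by simp
    have "light z \<subseteq> light z' \<or> light z' \<subseteq> light z"
      using light_chain[of z z' a] zZ z'Z by simp
    then show ?thesis
    proof
      assume sub: "light z \<subseteq> light z'"
      then have "card (light z) \<le> card (light z')" using card_mono[OF fin_light] by blast
      then have "card (light z) = card (light z')" using le by simp
      then have "light z = light z'" using card_subset_eq[OF fin_light sub] by simp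
      then show ?thesis by simp
    qed simp
  qed
  have "Mset a = light z"
  proof
    show "Mset a \<subseteq> light z" unfolding Mset_def using all by blast
    show "light z \<subseteq> Mset a" unfolding Mset_def using zZ by blast
  qed
  then show ?thesis using zZ by blast
qed

lemma light_Mset: "x \<in> MT \<Longrightarrow> a \<in> light x \<Longrightarrow> light x \<subseteq> Mset a"
  unfolding Mset_def by blast

lemma Mset_same:
  assumes x: "x \<in> MT" and a: "a \<in> light x" and b: "b \<in> light x"
  shows "Mset a = Mset b"
proof -
  obtain za where za: "za \<in> MT" "a \<in> light za" "Mset a = light za" using Mset_eq[OF x a] by blast
  obtain zb where zb: "zb \<in> MT" "b \<in> light zb" "Mset b = light zb" using Mset_eq[OF x b] by blast
  have "b \<in> light za" using light_Mset[OF x a] b za(3) by blast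
  then have 1: "light za \<subseteq> Mset b" using light_Mset[OF za(1)] by blast
  have "a \<in> light zb" using light_Mset[OF x b] a zb(3) by blast
  then have 2: "light zb \<subseteq> Mset a" using light_Mset[OF zb(1)] by blast
  show ?thesis using 1 2 za(3) zb(3) by blast
qed

definition col :: "'v \<Rightarrow> nat" where
  "col a = card {b \<in> Mset a. iota b < iota a}"

lemma col_inj:
  assumes x: "x \<in> MT" and a: "a \<in> light x" and b: "b \<in> light x" and c: "col a = col b"
  shows "a = b"
proof (rule ccontr)
  assume ab: "a \<noteq> b"
  obtain z where z: "z \<in> MT" "a \<in> light z" "Mset a = light z" using Mset_eq[OF x a] by blast
  let ?S = "Mset a"
  have S: "Mset b = ?S" using Mset_same[OF x a b] by simp
  have finS: "finite ?S" using z(3) fin_light by simp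
  have aS: "a \<in> ?S" and bS: "b \<in> ?S" using light_Mset[OF x a] a b by blast+
  have aV: "a \<in> V" and bV: "b \<in> V" using a b light_sub PO_sub PL_V by blast+
  have "iota a \<noteq> iota b" using ab inj_iota aV bV unfolding inj_on_def by blast
  then have "iota a < iota b \<or> iota b < iota a" by arith
  then show False
  proof
    assume lt: "iota a < iota b"
    have "{c \<in> ?S. iota c < iota a} \<subset> {c \<in> ?S. iota c < iota b}"
      using lt aS by auto
    then have "card {c \<in> ?S. iota c < iota a} < card {c \<in> ?S. iota c < iota b}"
      using finS by (simp add: psubset_card_mono)
    then show False using c S unfolding col_def by simp
  next
    assume lt: "iota b < iota a"
    have "{c \<in> ?S. iota c < iota b} \<subset> {c \<in> ?S. iota c < iota a}"
      using lt bS by auto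
    then have "card {c \<in> ?S. iota c < iota b} < card {c \<in> ?S. iota c < iota a}"
      using finS by (simp add: psubset_card_mono)
    then show False using c S unfolding col_def by simp
  qed
qed

lemma col_lt:
  assumes x: "x \<in> MT" and a: "a \<in> light x"
  shows "col a < dim_bound V E"
proof -
  obtain z where z: "z \<in> MT" "a \<in> light z" "Mset a = light z" using Mset_eq[OF x a] by blast
  have "{b \<in> light z. iota b < iota a} \<subset> light z" using z(2) by auto
  then have "card {b \<in> light z. iota b < iota a} < card (light z)"
    using fin_light by (simp add: psubset_card_mono)
  then have "col a < card (light z)" unfolding col_def using z(3) by simp
  then show ?thesis using light_card_le[OF z(1)] by simp
qed


definition Tset :: "'v \<Rightarrow> 'v set" where
  "Tset a = \<Union> (PO ` {z \<in> MT. a \<in> light z})"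

lemma Tset_PL: "Tset a \<subseteq> PL"
  unfolding Tset_def using PO_sub by blast

lemma fin_Tset: "finite (Tset a)"
  by (rule finite_subset[OF order_trans[OF Tset_PL PL_V] finV])

lemma Tset_sup: "x \<in> MT \<Longrightarrow> a \<in> light x \<Longrightarrow> PO x \<subseteq> Tset a"
  unfolding Tset_def by blast

lemma Tset_sub:
  assumes x: "x \<in> MT" and a: "a \<in> light x" and b: "b \<in> PO x" "b \<notin> light x" and c: "col a = col b"
  shows "Tset b \<subseteq> PO (heavy x)"
  unfolding Tset_def
proof (rule UN_least)
  fix z assume "z \<in> {z \<in> MT. b \<in> light z}"
  then have z: "z \<in> MT" "b \<in> light z" by auto
  have bh: "b \<in> PO (heavy x)" using b unfolding light_def by blast
  have bz: "b \<in> PO z" using z(2) light_sub by blast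
  have "(b,z) \<in> E\<^sup>*" "(b,x) \<in> E\<^sup>*" using bz b(1) unfolding players_of_def by blast+
  then have "(z,x) \<in> E\<^sup>* \<or> (x,z) \<in> E\<^sup>*" by (rule comparable)
  then show "PO z \<subseteq> PO (heavy x)"
  proof
    assume "(z,x) \<in> E\<^sup>*"
    then have "z = x \<or> z \<noteq> x \<and> (z,x) \<in> E\<^sup>+" by (rule rtranclD)
    then show ?thesis
    proof
      assume "z = x" then show ?thesis using z(2) b(2) by simp
    next
      assume "z \<noteq> x \<and> (z,x) \<in> E\<^sup>+"
      then have "(z,x) \<in> E\<^sup>+" by simp
      then have "\<exists>u. (z,u) \<in> E\<^sup>* \<and> (u,x) \<in> E" by (rule tranclD2)
      then obtain u where u: "(z,u) \<in> E\<^sup>*" "(u,x) \<in> E" by blast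
      have bu: "b \<in> PO u" using bz PO_mono[OF u(1)] by blast
      have "u = heavy x" using child_uniq[OF u(2) heavy_edge[OF x] bu bh] .
      then show ?thesis using PO_mono[OF u(1)] by simp
    qed
  next
    assume "(x,z) \<in> E\<^sup>*"
    then have "x = z \<or> x \<noteq> z \<and> (x,z) \<in> E\<^sup>+" by (rule rtranclD)
    then show ?thesis
    proof
      assume "x = z" then show ?thesis using z(2) b(2) by simp
    next
      assume "x \<noteq> z \<and> (x,z) \<in> E\<^sup>+"
      then have "PO x \<subseteq> light z" using light_above[OF b(1) _ z(1) z(2)] by blast
      then have "a \<in> light z" using a light_sub by blast
      then have "a = b" using col_inj[OF z(1) _ z(2) c] by blast
      then show ?thesis using a b(2) by simp
    qed
  qed
qed

lemma Tset_lt: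
  assumes x: "x \<in> MT" and a: "a \<in> light x" and b: "b \<in> PO x" "b \<notin> light x" and c: "col a = col b"
  shows "card (Tset b) < card (Tset a)"
proof -
  have "card (Tset b) \<le> card (PO (heavy x))"
    using Tset_sub[OF assms] finPO by (simp add: card_mono)
  also have "\<dots> < card (PO x)"
  proof (rule psubset_card_mono[OF finPO])
    show "PO (heavy x) \<subset> PO x" using heavy_sub[OF x] a unfolding light_def by blast
  qed
  also have "\<dots> \<le> card (Tset a)" using Tset_sup[OF x a] fin_Tset by (simp add: card_mono)
  finally show ?thesis .
qed

definition pri :: "nat \<Rightarrow> 'v \<Rightarrow> nat \<times> nat \<times> nat" where
  "pri i a = ((if col a = i then 0 else 1), card V - card (Tset a), iota a)"

lemma pri_inj: "inj_on (pri i) PL"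
  using inj_iota_PL unfolding pri_def inj_on_def by simp

lemma cover:
  assumes x: "x \<in> MT" and a: "a \<in> light x"
  shows "win (pri (col a)) x = a"
proof -
  have xV: "x \<in> V" using x MT_V by blast
  have ax: "a \<in> PO x" using a light_sub by blast
  show ?thesis
  proof (rule win_unique[OF pri_inj xV ax], rule ballI)
    fix b assume b: "b \<in> PO x"
    show "pri (col a) a \<le> pri (col a) b"
    proof (cases "b = a")
      case True then show ?thesis by simp
    next
      case ba: False
      show ?thesis
      proof (cases "col b = col a")
        case False then show ?thesis unfolding pri_def by simp
      next
        case True
        have bl: "b \<notin> light x"
        proof
          assume "b \<in> light x"
          then have "a = b" using col_inj[OF x a _ True[symmetric]] by blast
          then show False using ba by simp
        qed
        have lt: "card (Tset b) < card (Tset a)" using Tset_lt[OF x a b bl True[symmetric]] .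
        have "card (Tset a) \<le> card V" using card_mono[OF finV order_trans[OF Tset_PL PL_V]] .
        then have "card V - card (Tset a) < card V - card (Tset b)" using lt by simp
        then show ?thesis unfolding pri_def using True by simp
      qed
    qed
  qed
qed

lemma sum2_lt: "(\<Sum>k<n. (2::nat)^k) < 2^n"
  by (induction n) auto

lemma pow2_inj_aux:
  "\<forall>A A'. A \<subseteq> {..<n} \<longrightarrow> A' \<subseteq> {..<n} \<longrightarrow> (\<Sum>k\<in>A. (2::nat)^k) = (\<Sum>k\<in>A'. 2^k) \<longrightarrow> A = A'"
proof (induction n)
  case 0 then show ?case by simp
next
  case (Suc n)
  show ?case
  proof (intro allI impI)
    fix A A' :: "nat set"
    assume A: "A \<subseteq> {..<Suc n}" and A': "A' \<subseteq> {..<Suc n}" and eq: "(\<Sum>k\<in>A. (2::nat)^k) = (\<Sum>k\<in>A'. 2^k)"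
    have fA: "finite A" using finite_subset[OF A finite_lessThan] .
    have fA': "finite A'" using finite_subset[OF A' finite_lessThan] .
    have one: False if X: "X \<subseteq> {..<Suc n}" "n \<in> X" and Y: "Y \<subseteq> {..<Suc n}" "n \<notin> Y"
      and e: "(\<Sum>k\<in>X. (2::nat)^k) = (\<Sum>k\<in>Y. 2^k)" for X Y
    proof -
      have fX: "finite X" using finite_subset[OF X(1) finite_lessThan] .
      have Yn: "Y \<subseteq> {..<n}" using Y by (auto simp: less_Suc_eq)
      have "(\<Sum>k\<in>Y. (2::nat)^k) \<le> (\<Sum>k<n. 2^k)" by (rule sum_mono2[OF finite_lessThan Yn]) simp
      also have "\<dots> < 2^n" by (rule sum2_lt)
      also have "(2::nat)^n \<le> (\<Sum>k\<in>X. 2^k)" by (rule member_le_sum[OF X(2) _ fX]) simp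
      finally show False using e by simp
    qed
    show "A = A'"
    proof (cases "n \<in> A")
      case nA: True
      show ?thesis
      proof (cases "n \<in> A'")
        case nA': True
        have "(\<Sum>k\<in>A. (2::nat)^k) = 2^n + (\<Sum>k\<in>A-{n}. 2^k)" using sum.remove[OF fA nA] .
        moreover have "(\<Sum>k\<in>A'. (2::nat)^k) = 2^n + (\<Sum>k\<in>A'-{n}. 2^k)" using sum.remove[OF fA' nA'] .
        ultimately have e2: "(\<Sum>k\<in>A-{n}. (2::nat)^k) = (\<Sum>k\<in>A'-{n}. 2^k)" using eq by simp
        have "A - {n} \<subseteq> {..<n}" "A' - {n} \<subseteq> {..<n}" using A A' by (auto simp: less_Suc_eq)
        then have "A - {n} = A' - {n}" using Suc.IH e2 by blast
        then show ?thesis using nA nA' by blast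
      next
        case False
        then show ?thesis using one[OF A nA A' False eq] by simp
      qed
    next
      case nA: False
      show ?thesis
      proof (cases "n \<in> A'")
        case True
        then show ?thesis using one[OF A' True A nA eq[symmetric]] by simp
      next
        case nA': False
        have "A \<subseteq> {..<n}" "A' \<subseteq> {..<n}" using A A' nA nA' by (auto simp: less_Suc_eq)
        then show ?thesis using Suc.IH eq by blast
      qed
    qed
  qed
qed

definition sig :: "'v \<Rightarrow> real" where
  "sig x = 2 ^ iota x"

lemma sig_inj:
  assumes A: "A \<subseteq> MT" and A': "A' \<subseteq> MT" and eq: "sum sig A = sum sig A'"
  shows "A = A'"
proof -
  have injA: "inj_on iota A" using inj_on_subset[OF inj_iota order_trans[OF A MT_V]] .
  have injA': "inj_on iota A'" using inj_on_subset[OF inj_iota order_trans[OF A' MT_V]] .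
  have r: "sum sig X = real (\<Sum>k\<in>iota ` X. (2::nat)^k)" if "inj_on iota X" for X
    using that unfolding sig_def by (simp add: sum.reindex)
  have "real (\<Sum>k\<in>iota ` A. (2::nat)^k) = real (\<Sum>k\<in>iota ` A'. (2::nat)^k)"
    using eq r[OF injA] r[OF injA'] by (simp only:)
  then have seq: "(\<Sum>k\<in>iota ` A. (2::nat)^k) = (\<Sum>k\<in>iota ` A'. 2^k)"
    by (simp only: of_nat_eq_iff)
  let ?n = "Suc (Max (iota ` V))"
  have bV: "iota ` V \<subseteq> {..<?n}"
  proof
    fix k assume "k \<in> iota ` V"
    then have "k \<le> Max (iota ` V)" using Max_ge[OF finite_imageI[OF finV]] by blast
    then show "k \<in> {..<?n}" by simp
  qed
  have s1: "iota ` A \<subseteq> {..<?n}" using bV A MT_V by blast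
  have s2: "iota ` A' \<subseteq> {..<?n}" using bV A' MT_V by blast
  have "iota ` A = iota ` A'" using pow2_inj_aux[of ?n, rule_format, OF s1 s2 seq] .
  then show ?thesis using inj_on_image_eq_iff[OF inj_iota order_trans[OF A MT_V] order_trans[OF A' MT_V]] by simp
qed

lemma decode:
  assumes B: "B \<in> brackets V E" and B': "B' \<in> brackets V E"
    and sc: "\<forall>i<dim_bound V E. score V E sig (win (pri i)) B = score V E sig (win (pri i)) B'"
  shows "B = B'"
proof -
  have agree: "{y \<in> MT. win (pri i) y = B y} = {y \<in> MT. win (pri i) y = B' y}"
    if "i < dim_bound V E" for i
    using sig_inj[of "{y \<in> MT. win (pri i) y = B y}" "{y \<in> MT. win (pri i) y = B' y}"]
      sc that unfolding score_def by auto
  have key: "c = B x \<longleftrightarrow> c = B' x" if x: "x \<in> MT" and c: "c \<in> light x" for x c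
  proof -
    have "col c < dim_bound V E" using col_lt[OF x c] .
    then have "{y \<in> MT. win (pri (col c)) y = B y} = {y \<in> MT. win (pri (col c)) y = B' y}"
      by (rule agree)
    then have "win (pri (col c)) x = B x \<longleftrightarrow> win (pri (col c)) x = B' x" using x by blast
    then show ?thesis using cover[OF x c] by simp
  qed
  have main: "x \<in> V \<Longrightarrow> B x = B' x" for x
  proof (induction x rule: wf_induct_rule[OF wfE])
    case (1 x)
    show ?case
    proof (cases "x \<in> PL")
      case True then show ?thesis using B B' unfolding brackets_def by auto
    next
      case False
      then have x: "x \<in> MT" using 1 unfolding matches_def by auto
      have Bx: "B x \<in> PO x" using bracket_PO[OF B] 1 by blast
      have B'x: "B' x \<in> PO x" using bracket_PO[OF B'] 1 by blast
      show ?thesis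
      proof (cases "B x \<in> light x")
        case True then show ?thesis using key[OF x True] by simp
      next
        case nl: False
        show ?thesis
        proof (cases "B' x \<in> light x")
          case True then show ?thesis using key[OF x True] by simp
        next
          case nl': False
          obtain u where u: "u \<in> in_nbrs E x" "B x = B u" using B x unfolding brackets_def by blast
          obtain u' where u': "u' \<in> in_nbrs E x" "B' x = B' u'" using B' x unfolding brackets_def by blast
          have ue: "(u,x) \<in> E" and ue': "(u',x) \<in> E" using u u' unfolding in_nbrs_def by auto
          have uV: "u \<in> V" and uV': "u' \<in> V" using ue ue' edgeV by blast+
          have bh: "B x \<in> PO (heavy x)" using Bx nl unfolding light_def by blast
          have bh': "B' x \<in> PO (heavy x)" using B'x nl' unfolding light_def by blast
          have "B u \<in> PO u" using bracket_PO[OF B uV] .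
          then have "u = heavy x" using child_uniq[OF ue heavy_edge[OF x]] bh u(2) by simp
          moreover have "B' u' \<in> PO u'" using bracket_PO[OF B' uV'] .
          then have "u' = heavy x" using child_uniq[OF ue' heavy_edge[OF x]] bh' u'(2) by simp
          ultimately have "u = u'" by simp
          moreover have "B u = B' u" using 1 ue uV by blast
          ultimately show ?thesis using u(2) u'(2) by simp
        qed
      qed
    qed
  qed
  show ?thesis
  proof
    fix x show "B x = B' x"
    proof (cases "x \<in> V")
      case True then show ?thesis using main by blast
    next
      case False then show ?thesis using B B' unfolding brackets_def by auto
    qed
  qed
qed


end

theorem theorem1p8:
  fixes V :: "'v set" and E :: "('v \<times> 'v) set"
  assumes "se_tournament V E"
    and "card (players V E) \<ge> 2"
  shows "(\<forall>\<sigma>. scoring_system V E \<sigma> \<longrightarrow> tdim V E \<sigma> \<ge> dim_bound V E) \<and>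
         (\<exists>\<sigma>. scoring_system V E \<sigma> \<and> tdim V E \<sigma> = dim_bound V E)"
proof -
  interpret tour V E using assms(1) by (rule tour.intro)
  have ne: "matches V E \<noteq> {}" using MT_nonempty[OF assms(2)] .
  have part1: "\<forall>\<sigma>. scoring_system V E \<sigma> \<longrightarrow> tdim V E \<sigma> \<ge> dim_bound V E"
    using tdim_ge[OF _ ne] by blast
  have sc: "scoring_system V E sig" unfolding scoring_system_def sig_def by simp
  define F where "F = (\<lambda>i. win (pri i)) ` {..<dim_bound V E}"
  have Fsub: "F \<subseteq> brackets V E" unfolding F_def using win_bracket[OF pri_inj] by blast
  have res: "resolving V E sig F"
    unfolding resolving_def
  proof (intro conjI Fsub ballI impI)
    fix B B' assume B: "B \<in> brackets V E" and B': "B' \<in> brackets V E" and ne: "B \<noteq> B'"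
    have "\<not> (\<forall>i<dim_bound V E. score V E sig (win (pri i)) B = score V E sig (win (pri i)) B')"
      using decode[OF B B'] ne by blast
    then obtain i where "i < dim_bound V E" "score V E sig (win (pri i)) B \<noteq> score V E sig (win (pri i)) B'"
      by blast
    then show "\<exists>Bi\<in>F. score V E sig Bi B \<noteq> score V E sig Bi B'" unfolding F_def by blast
  qed
  have finF: "finite F" unfolding F_def by simp
  have cF: "card F \<le> dim_bound V E"
    unfolding F_def using card_image_le[of "{..<dim_bound V E}" "\<lambda>i. win (pri i)"] by simp
  have "tdim V E sig \<le> card F"
    unfolding tdim_def by (rule Least_le) (use res finF in blast)
  then have "tdim V E sig \<le> dim_bound V E" using cF by simp
  moreover have "dim_bound V E \<le> tdim V E sig" using tdim_ge[OF sc ne] .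
  ultimately have "tdim V E sig = dim_bound V E" by simp
  then show ?thesis using part1 sc by blast
qed

end
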